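(* Let $\mathcal{K}^{\langle 0\rangle}\subset\mathbb{R}^2$ be a simple nested fractal generated by the similitudes $\Psi_1,\dots,\Psi_N$, and let $V_0^{\langle 0\rangle}$ be its set of essential fixed points, $k=\# V_0^{\langle 0\rangle}$. (1) If $k\ge 3$, then the points of $V_0^{\langle 0\rangle}$ are the vertices of a regular polygon. (2) If $k=2$, then $\mathcal{K}^{\langle 0\rangle}$ is the line segment connecting the two points of $V_0^{\langle 0\rangle}$.
   Context: Let $L>1$, $N\ge 2$, let $U$ be an isometry of $\mathbb{R}^2$ and let $\nu_1=0,\nu_2,\dots,\nu_N\in\mathbb{R}^2$. Set $\Psi_i(x)=\frac1L U(x)+\nu_i$, $i=1,\dots,N$, and let $\mathcal{K}^{\langle 0\rangle}$ be the unique nonempty compact set with $\mathcal{K}^{\langle 0\rangle}=\bigcup_{i=1}^N\Psi_i(\mathcal{K}^{\langle 0\rangle})$. Each $\Psi_i$ has exactly one fixed point. A fixed point $x$ is called essential if there exist another fixed point $y$ and two different similitudes $\Psi_i,\Psi_j$ with $\Psi_i(x)=\Psi_j(y)$; $V_0^{\langle 0\rangle}$ denotes the set of essential fixed points. $\mathcal{K}^{\langle 0\rangle}$ is a simple nested fractal if: (1) $\#V_0^{\langle 0\rangle}\ge 2$; (2) (open set condition) there is an open $O\subset\mathbb{R}^2$ with $\Psi_i(O)\cap\Psi_j(O)=\emptyset$ for $i\ne j$ and $\bigcup_i\Psi_i(O)\subseteq O$; (3) (nesting) $\Psi_i(\mathcal{K}^{\langle 0\rangle})\cap\Psi_j(\mathcal{K}^{\langle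 0\rangle})=\Psi_i(V_0^{\langle 0\rangle})\cap\Psi_j(V_0^{\langle 0\rangle})$ for $i\neq j$; (4) (symmetry) for $x,y\in V_0^{\langle 0\rangle}$ let $S_{x,y}$ be the reflection in the perpendicular bisector of $[x,y]$; then for every $i$ and all $x,y\in V_0^{\langle 0\rangle}$ there is $j$ with $S_{x,y}(\Psi_i(V_0^{\langle 0\rangle}))=\Psi_j(V_0^{\langle 0\rangle})$; (5) (connectivity) the graph on $V_{-1}^{\langle 0\rangle}=\bigcup_i\Psi_i(V_0^{\langle 0\rangle})$ in which $x\sim y$ iff $x,y\in\Psi_i(\mathcal{K}^{\langle 0\rangle})$ for some $i$, is connected. *)

theory Defs
  imports "HOL-Analysis.Analysis"
begin

type_synonym pt = "real^2"

definition Psi :: "real \<Rightarrow> (pt \<Rightarrow> pt) \<Rightarrow> (nat \<Rightarrow> pt) \<Rightarrow> nat \<Rightarrow> pt \<Rightarrow> pt" where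
  "Psi L U \<nu> i x = (1 / L) *\<^sub>R U x + \<nu> i"

definition fixed_points :: "real \<Rightarrow> (pt \<Rightarrow> pt) \<Rightarrow> (nat \<Rightarrow> pt) \<Rightarrow> nat \<Rightarrow> pt set" where
  "fixed_points L U \<nu> N = {x. \<exists>i\<in>{1..N}. Psi L U \<nu> i x = x}"

definition essential_fixed_points :: "real \<Rightarrow> (pt \<Rightarrow> pt) \<Rightarrow> (nat \<Rightarrow> pt) \<Rightarrow> nat \<Rightarrow> pt set" where
  "essential_fixed_points L U \<nu> N =
     {x \<in> fixed_points L U \<nu> N. \<exists>y \<in> fixed_points L U \<nu> N. y \<noteq> x \<and>
        (\<exists>i\<in>{1..N}. \<exists>j\<in>{1..N}. i \<noteq> j \<and> Psi L U \<nu> i x = Psi L U \<nu> j y)}"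

definition bisector_reflection :: "pt \<Rightarrow> pt \<Rightarrow> pt \<Rightarrow> pt" where
  "bisector_reflection x y z =
     z - (2 * (((z - (1/2) *\<^sub>R (x + y)) \<bullet> (y - x)) / ((y - x) \<bullet> (y - x)))) *\<^sub>R (y - x)"

definition simple_nested_fractal ::
    "real \<Rightarrow> (pt \<Rightarrow> pt) \<Rightarrow> (nat \<Rightarrow> pt) \<Rightarrow> nat \<Rightarrow> pt set \<Rightarrow> bool" where
  "simple_nested_fractal L U \<nu> N K \<longleftrightarrow>
     (let V0 = essential_fixed_points L U \<nu> N;
          V1 = (\<Union>i\<in>{1..N}. Psi L U \<nu> i ` V0);
          E = {(a, b). a \<in> V1 \<and> b \<in> V1 \<and>
                 (\<exists>i\<in>{1..N}. a \<in> Psi L U \<nu> i ` K \<and> b \<in> Psi L U \<nu> i ` K)}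
      in card V0 \<ge> 2
       \<and> (\<exists>Op. open Op \<and> Op \<noteq> {} \<and>
             (\<forall>i\<in>{1..N}. \<forall>j\<in>{1..N}. i \<noteq> j \<longrightarrow> Psi L U \<nu> i ` Op \<inter> Psi L U \<nu> j ` Op = {}) \<and>
             (\<Union>i\<in>{1..N}. Psi L U \<nu> i ` Op) \<subseteq> Op)
       \<and> (\<forall>i\<in>{1..N}. \<forall>j\<in>{1..N}. i \<noteq> j \<longrightarrow>
             Psi L U \<nu> i ` K \<inter> Psi L U \<nu> j ` K = Psi L U \<nu> i ` V0 \<inter> Psi L U \<nu> j ` V0)
       \<and> (\<forall>i\<in>{1..N}. \<forall>x\<in>V0. \<forall>y\<in>V0. x \<noteq> y \<longrightarrow>
             (\<exists>j\<in>{1..N}. bisector_reflection x y ` (Psi L U \<nu> i ` V0) = Psi L U \<nu> j ` V0))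
       \<and> (\<forall>a\<in>V1. \<forall>b\<in>V1. (a, b) \<in> E\<^sup>*))"

definition regular_polygon_vertices :: "pt set \<Rightarrow> bool" where
  "regular_polygon_vertices V \<longleftrightarrow>
     (\<exists>c r \<theta>. r > 0 \<and>
        V = {c + r *\<^sub>R vector [cos (\<theta> + 2 * pi * real k / real (card V)),
                               sin (\<theta> + 2 * pi * real k / real (card V))] | k. k < card V})"

end

theory Submission
  imports Defs
begin


definition cen :: "pt set \<Rightarrow> pt" where
  "cen A = inverse (real (card A)) *\<^sub>R (\<Sum>a\<in>A. a)"

lemma cen_fixed:
  fixes A :: "pt set" and M :: "pt \<Rightarrow> pt"
  assumes "finite A" "A \<noteq> {}" "linear M" "(\<lambda>z. M z + k) ` A = A"
  shows "M (cen A) + k = cen A"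
proof -
  let ?F = "\<lambda>z. M z + k"
  have inj: "inj_on ?F A" using assms(1,4) by (simp add: eq_card_imp_inj_on)
  have "(\<Sum>a\<in>A. ?F a) = (\<Sum>a\<in>?F ` A. a)" using sum.reindex[OF inj, of id] by simp
  also have "\<dots> = (\<Sum>a\<in>A. a)" using assms(4) by simp
  finally have s: "M (\<Sum>a\<in>A. a) + real (card A) *\<^sub>R k = (\<Sum>a\<in>A. a)"
    using assms(3) by (simp add: sum.distrib linear_sum sum_constant_scaleR del: sum_constant)
  have c: "real (card A) \<noteq> 0" using assms(1,2) by simp
  have "M (cen A) + k = inverse (real (card A)) *\<^sub>R (M (\<Sum>a\<in>A. a) + real (card A) *\<^sub>R k)"
    unfolding cen_def using c assms(3) by (simp add: linear_scale scaleR_add_right)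
  also have "\<dots> = cen A" unfolding cen_def s ..
  finally show ?thesis .
qed



locale snf =
  fixes L :: real and N :: nat and U :: "pt \<Rightarrow> pt" and \<nu> :: "nat \<Rightarrow> pt" and K :: "pt set"
  assumes L1: "L > 1" and N2: "N \<ge> 2" and iso: "\<forall>x y. dist (U x) (U y) = dist x y"
    and cK: "compact K" and Kne: "K \<noteq> {}" and Katt: "K = (\<Union>i\<in>{1..N}. Psi L U \<nu> i ` K)"
    and snf: "simple_nested_fractal L U \<nu> N K"
begin

abbreviation P where "P \<equiv> Psi L U \<nu>"
abbreviation V0 where "V0 \<equiv> essential_fixed_points L U \<nu> N"
abbreviation V1 where "V1 \<equiv> (\<Union>i\<in>{1..N}. P i ` V0)"
definition Q where "Q x = U x - U 0"

lemma Q_orth: "orthogonal_transformation Q"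
  unfolding orthogonal_transformation_isometry Q_def using iso by (simp add: dist_norm)

lemma Q_lin: "linear Q" using Q_orth orthogonal_transformation_linear by blast
lemma Q_inner: "Q v \<bullet> Q w = v \<bullet> w" using Q_orth orthogonal_transformation_def by blast
lemma Q_norm: "norm (Q v) = norm v" using Q_orth orthogonal_transformation_norm by blast
lemma Q_inj: "Q v = Q w \<Longrightarrow> v = w"
proof -
  assume "Q v = Q w"
  moreover have "inj Q" using Q_orth by (rule orthogonal_transformation_inj)
  ultimately show ?thesis by (simp add: inj_eq)
qed
lemma Q_surj: "\<exists>f. Q f = e"
proof -
  have "surj Q" using Q_orth by (rule orthogonal_transformation_surj)
  then obtain f where "e = Q f" by (blast dest: surjD)
  then show ?thesis by blast
qed
lemma Q_diff: "Q (v - w) = Q v - Q w" using Q_lin by (simp add: linear_diff)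
lemma Q_scale: "Q (c *\<^sub>R v) = c *\<^sub>R Q v" using Q_lin by (simp add: linear_scale)
lemma Q_add: "Q (v + w) = Q v + Q w" using Q_lin by (simp add: linear_add)

lemma U_eq: "U x = Q x + U 0" unfolding Q_def by simp

lemma U_diff: "U x - U y = Q (x - y)" using Q_diff[of x y] by (simp add: Q_def)

lemma P_diff: "P i x - P i y = (1/L) *\<^sub>R Q (x - y)"
  unfolding Psi_def by (simp add: U_diff[symmetric] scaleR_diff_right)

lemma dist_P: "dist (P i x) (P i y) = dist x y / L"
proof -
  have "dist (P i x) (P i y) = norm ((1/L) *\<^sub>R Q (x - y))" by (simp add: dist_norm P_diff)
  also have "\<dots> = dist x y / L" using L1 by (simp add: Q_norm dist_norm)
  finally show ?thesis .
qed

lemma P_K: "i \<in> {1..N} \<Longrightarrow> z \<in> K \<Longrightarrow> P i z \<in> K"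
proof -
  assume "i \<in> {1..N}" "z \<in> K"
  then have "P i z \<in> (\<Union>i\<in>{1..N}. P i ` K)" by blast
  then show ?thesis by (subst Katt)
qed

lemma fixed_in_K:
  assumes i: "i \<in> {1..N}" and fx: "P i x = x"
  shows "x \<in> K"
proof -
  have "continuous_on K (\<lambda>z. dist z x)" by (intro continuous_intros)
  then obtain z0 where z0: "z0 \<in> K" "\<And>z. z \<in> K \<Longrightarrow> dist z0 x \<le> dist z x"
    using continuous_attains_inf[OF cK Kne] by blast
  have "P i z0 \<in> K" using P_K[OF i z0(1)] .
  then have "dist z0 x \<le> dist (P i z0) (P i x)" using z0(2) fx by simp
  also have "\<dots> = dist z0 x / L" by (rule dist_P)
  finally have "dist z0 x \<le> dist z0 x / L" .
  then have "dist z0 x = 0" using L1 zero_le_dist[of z0 x]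
  proof -
    have "dist z0 x * L \<le> dist z0 x" using \<open>dist z0 x \<le> dist z0 x / L\<close> L1 by (simp add: le_divide_eq)
    then have "dist z0 x * (L - 1) \<le> 0" by (simp add: algebra_simps)
    then show ?thesis using L1 zero_le_dist[of z0 x] by (simp add: mult_le_0_iff)
  qed
  then show ?thesis using z0(1) by simp
qed

lemma V0_fixed: "x \<in> V0 \<Longrightarrow> \<exists>i\<in>{1..N}. P i x = x"
  unfolding essential_fixed_points_def fixed_points_def by blast

lemma V0_K: "V0 \<subseteq> K" using V0_fixed fixed_in_K by blast

lemma V0_V1: "x \<in> V0 \<Longrightarrow> x \<in> V1"
proof -
  assume x: "x \<in> V0"
  then obtain i where i: "i \<in> {1..N}" "P i x = x" using V0_fixed by blast
  then have "x \<in> P i ` V0" using x by (metis image_eqI)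
  then show ?thesis using i by blast
qed

lemma V1_K: "V1 \<subseteq> K" using V0_K P_K by blast

lemma snf_all:
  "card V0 \<ge> 2
       \<and> (\<exists>Op. open Op \<and> Op \<noteq> {} \<and>
             (\<forall>i\<in>{1..N}. \<forall>j\<in>{1..N}. i \<noteq> j \<longrightarrow> P i ` Op \<inter> P j ` Op = {}) \<and>
             (\<Union>i\<in>{1..N}. P i ` Op) \<subseteq> Op)
       \<and> (\<forall>i\<in>{1..N}. \<forall>j\<in>{1..N}. i \<noteq> j \<longrightarrow>
             P i ` K \<inter> P j ` K = P i ` V0 \<inter> P j ` V0)
       \<and> (\<forall>i\<in>{1..N}. \<forall>x\<in>V0. \<forall>y\<in>V0. x \<noteq> y \<longrightarrow>
             (\<exists>j\<in>{1..N}. bisector_reflection x y ` (P i ` V0) = P j ` V0))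
       \<and> (\<forall>a\<in>V1. \<forall>b\<in>V1. (a, b) \<in> {(a, b). a \<in> V1 \<and> b \<in> V1 \<and>
                 (\<exists>i\<in>{1..N}. a \<in> P i ` K \<and> b \<in> P i ` K)}\<^sup>*)"
  using snf unfolding simple_nested_fractal_def Let_def .

lemma cardV0: "card V0 \<ge> 2" using snf_all by (rule conjunct1)
lemma OSC: "\<exists>Op. open Op \<and> Op \<noteq> {} \<and>
             (\<forall>i\<in>{1..N}. \<forall>j\<in>{1..N}. i \<noteq> j \<longrightarrow> P i ` Op \<inter> P j ` Op = {}) \<and>
             (\<Union>i\<in>{1..N}. P i ` Op) \<subseteq> Op"
  using snf_all by (elim conjE)
lemma nest0: "\<forall>i\<in>{1..N}. \<forall>j\<in>{1..N}. i \<noteq> j \<longrightarrow>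
             P i ` K \<inter> P j ` K = P i ` V0 \<inter> P j ` V0"
  using snf_all by (elim conjE)
lemma nest: "i \<in> {1..N} \<Longrightarrow> j \<in> {1..N} \<Longrightarrow> i \<noteq> j \<Longrightarrow>
             P i ` K \<inter> P j ` K = P i ` V0 \<inter> P j ` V0"
  using nest0 by simp
lemma symm0: "\<forall>i\<in>{1..N}. \<forall>x\<in>V0. \<forall>y\<in>V0. x \<noteq> y \<longrightarrow>
             (\<exists>j\<in>{1..N}. bisector_reflection x y ` (P i ` V0) = P j ` V0)"
  using snf_all by (elim conjE)
lemma symm: "i \<in> {1..N} \<Longrightarrow> x \<in> V0 \<Longrightarrow> y \<in> V0 \<Longrightarrow> x \<noteq> y \<Longrightarrow>
             \<exists>j\<in>{1..N}. bisector_reflection x y ` (P i ` V0) = P j ` V0"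
  using symm0 by blast
definition E where "E = {(a, b). a \<in> V1 \<and> b \<in> V1 \<and>
                 (\<exists>i\<in>{1..N}. a \<in> P i ` K \<and> b \<in> P i ` K)}"
lemma conn0: "\<forall>a\<in>V1. \<forall>b\<in>V1. (a, b) \<in> {(a, b). a \<in> V1 \<and> b \<in> V1 \<and>
                 (\<exists>i\<in>{1..N}. a \<in> P i ` K \<and> b \<in> P i ` K)}\<^sup>*"
  using snf_all by (elim conjE)
lemma conn: "a \<in> V1 \<Longrightarrow> b \<in> V1 \<Longrightarrow> (a, b) \<in> E\<^sup>*"
  using conn0 unfolding E_def by blast

lemma finV0: "finite V0" using cardV0 card.infinite by fastforce

end


definition reflv :: "pt \<Rightarrow> pt \<Rightarrow> pt" where
  "reflv e z = z - (2 * (z \<bullet> e) / (e \<bullet> e)) *\<^sub>R e"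

lemma refl_linear: "linear (reflv e)"
  unfolding reflv_def
  by (rule linearI) (simp_all add: inner_add_left add_divide_distrib scaleR_add_left algebra_simps
      scaleR_diff_right)

lemma aff_aux: "z - (2 * ((z - m) \<bullet> e / (e \<bullet> e))) *\<^sub>R e =
   (z - (2 * (z \<bullet> e) / (e \<bullet> e)) *\<^sub>R e) + (2 * (m \<bullet> e) / (e \<bullet> e)) *\<^sub>R e"
  by (simp add: inner_diff_left diff_divide_distrib right_diff_distrib scaleR_diff_left)

lemma bisector_affine:
  "bisector_reflection x y z = reflv (y - x) z +
     (2 * (((1/2) *\<^sub>R (x + y)) \<bullet> (y - x)) / ((y - x) \<bullet> (y - x))) *\<^sub>R (y - x)"
  unfolding bisector_reflection_def reflv_def by (rule aff_aux)

lemma refl_invol: "e \<noteq> 0 \<Longrightarrow> reflv e (reflv e z) = z"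
  unfolding reflv_def
  by (simp add: inner_diff_left algebra_simps)

lemma refl_inj: "e \<noteq> 0 \<Longrightarrow> reflv e a = reflv e b \<Longrightarrow> a = b"
  by (metis refl_invol)

lemma bis_fix:
  assumes "x \<noteq> y" "bisector_reflection x y g = g"
  shows "dist g x = dist g y"
proof -
  let ?e = "y - x"
  have e0: "?e \<bullet> ?e \<noteq> 0" using assms(1) by simp
  from assms(2) have "(2 * ((g - (1/2) *\<^sub>R (x + y)) \<bullet> ?e) / (?e \<bullet> ?e)) *\<^sub>R ?e = 0"
    unfolding bisector_reflection_def by simp
  then have "(g - (1/2) *\<^sub>R (x + y)) \<bullet> ?e = 0" using assms(1) e0 by simp
  then have h: "2 * (g \<bullet> y) - 2 * (g \<bullet> x) = y \<bullet> y - x \<bullet> x"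
    by (simp add: inner_diff_left inner_diff_right inner_add_left inner_add_right inner_commute algebra_simps)
  have "(dist g x)^2 = (dist g y)^2"
    unfolding dist_norm power2_norm_eq_inner
    using h by (simp add: inner_diff_left inner_diff_right inner_commute algebra_simps)
  then show ?thesis by (simp add: power2_eq_iff_nonneg)
qed

definition cplx :: "pt \<Rightarrow> complex" where "cplx v = Complex (v$1) (v$2)"

lemma inner2: "(v::pt) \<bullet> w = v$1 * w$1 + v$2 * w$2"
  by (simp add: inner_vec_def sum_2)

lemma cplx_add: "cplx (a + b) = cplx a + cplx b" by (simp add: cplx_def complex_eq_iff)
lemma cplx_diff: "cplx (a - b) = cplx a - cplx b" by (simp add: cplx_def complex_eq_iff)
lemma cplx_scale: "cplx (c *\<^sub>R a) = of_real c * cplx a" by (simp add: cplx_def complex_eq_iff)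
lemma cplx_inj: "cplx a = cplx b \<longleftrightarrow> a = b"
  by (auto simp: cplx_def complex_eq_iff vec_eq_iff forall_2)
lemma cplx_0: "cplx a = 0 \<longleftrightarrow> a = 0"
  by (auto simp: cplx_def complex_eq_iff vec_eq_iff forall_2)
lemma cplx_vector: "cplx (vector [a, b]) = Complex a b" by (simp add: cplx_def)

lemma nz2: "(f::pt) \<noteq> 0 \<Longrightarrow> f$1 * f$1 + f$2 * f$2 \<noteq> 0"
proof
  assume "f \<noteq> 0" "f$1 * f$1 + f$2 * f$2 = 0"
  then have "f$1 = 0" "f$2 = 0" by (simp_all add: add_nonneg_eq_0_iff)
  then have "f = 0" by (simp add: vec_eq_iff forall_2)
  then show False using \<open>f \<noteq> 0\<close> by simp
qed

definition alpha :: "pt \<Rightarrow> complex" where "alpha f = - (cplx f / cnj (cplx f))"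

lemma cplx_refl:
  assumes "f \<noteq> 0"
  shows "cplx (reflv f z) = alpha f * cnj (cplx z)"
proof -
  have d: "f$1 * f$1 + f$2 * f$2 \<noteq> 0" using nz2[OF assms] .
  have c: "cnj (cplx f) \<noteq> 0" using assms by (simp add: cplx_0)
  define a where "a = f$1"
  define b where "b = f$2"
  define p where "p = z$1"
  define q where "q = z$2"
  have D: "a * a + b * b \<noteq> 0" using d by (simp add: a_def b_def)
  have r1: "(reflv f z)$1 = p - 2 * (p * a + q * b) / (a * a + b * b) * a"
    by (simp add: reflv_def inner2 a_def b_def p_def q_def)
  have r2: "(reflv f z)$2 = q - 2 * (p * a + q * b) / (a * a + b * b) * b"
    by (simp add: reflv_def inner2 a_def b_def p_def q_def)
  define t where "t = 2 * (p * a + q * b) / (a * a + b * b)"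
  have t: "t * (a * a + b * b) = 2 * (p * a + q * b)" using D by (simp add: t_def)
  have re0: "(p - t * a) * a + (q - t * b) * b = p * a + q * b - t * (a * a + b * b)"
    by (simp add: algebra_simps)
  have re: "(p - t * a) * a + (q - t * b) * b = - (a * p + b * q)"
    unfolding re0 t by (simp add: algebra_simps)
  have im: "(q - t * b) * a - (p - t * a) * b = - (b * p - a * q)"
    by (simp add: algebra_simps)
  have r1': "(reflv f z)$1 = p - t * a" using r1 t_def by simp
  have r2': "(reflv f z)$2 = q - t * b" using r2 t_def by simp
  have "cplx (reflv f z) * cnj (cplx f) = - (cplx f * cnj (cplx z))"
    unfolding complex_eq_iff using re im
    by (simp add: cplx_def r1' r2' a_def[symmetric] b_def[symmetric] p_def[symmetric] q_def[symmetric] algebra_simps)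
  then show ?thesis unfolding alpha_def using c by (simp add: field_simps)
qed

lemma alpha_norm: "f \<noteq> 0 \<Longrightarrow> cmod (alpha f) = 1"
  by (simp add: alpha_def norm_divide cplx_0)

lemma alpha_eq:
  assumes "f \<noteq> 0" "g \<noteq> 0" "alpha f = alpha g"
  shows "g = ((f \<bullet> g) / (f \<bullet> f)) *\<^sub>R f"
proof -
  have c1: "cnj (cplx f) \<noteq> 0" "cnj (cplx g) \<noteq> 0" using assms by (simp_all add: cplx_0)
  have "cplx f * cnj (cplx g) = cplx g * cnj (cplx f)"
    using assms(3) c1 unfolding alpha_def by (simp add: field_simps)
  then have "g$1 * f$2 = f$1 * g$2" by (simp add: cplx_def complex_eq_iff)
  then have cr: "f$1 * g$2 = f$2 * g$1" by (simp add: mult.commute)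
  have d: "f$1 * f$1 + f$2 * f$2 \<noteq> 0" using nz2[OF assms(1)] .
  show ?thesis
  proof (simp add: vec_eq_iff forall_2 inner2, intro conjI)
    show "g$1 = (f$1 * g$1 + f$2 * g$2) * f$1 / (f$1 * f$1 + f$2 * f$2)"
      using d cr by (simp add: field_simps)
    show "g$2 = (f$1 * g$1 + f$2 * g$2) * f$2 / (f$1 * f$1 + f$2 * f$2)"
      using d cr by (simp add: field_simps)
  qed
qed



lemma core:
  fixes Z A :: "complex set" and n :: nat
  assumes fZ: "finite Z" and cZ: "card Z = n" and n3: "n \<ge> 3" and Z0: "0 \<notin> Z"
    and cA: "card A \<ge> n - 1" and nA: "\<forall>a\<in>A. a \<noteq> 0"
    and inv: "\<forall>a\<in>A. \<forall>w\<in>Z. a * cnj w \<in> Z"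
  shows "\<exists>z0. z0 \<noteq> 0 \<and> Z = {exp (2 * of_real pi * \<i> * of_nat j / of_nat n) * z0 | j. j < n}"
proof -
  define \<Omega> where "\<Omega> = {\<omega>. \<omega> \<noteq> 0 \<and> (\<forall>w\<in>Z. \<omega> * w \<in> Z)}"
  have perm: "(\<lambda>w. \<omega> * w) ` Z = Z" if "\<omega> \<in> \<Omega>" for \<omega>
  proof (rule endo_inj_surj[OF fZ])
    show "(\<lambda>w. \<omega> * w) ` Z \<subseteq> Z" using that unfolding \<Omega>_def by auto
    show "inj_on (\<lambda>w. \<omega> * w) Z" using that unfolding \<Omega>_def by (auto simp: inj_on_def)
  qed
  have Oinv: "inverse \<omega> \<in> \<Omega>" if "\<omega> \<in> \<Omega>" for \<omega>
  proof -
    have "inverse \<omega> * w \<in> Z" if w: "w \<in> Z" for w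
    proof -
      from w perm[OF \<open>\<omega> \<in> \<Omega>\<close>] obtain w' where "w' \<in> Z" "w = \<omega> * w'" by blast
      then show ?thesis using \<open>\<omega> \<in> \<Omega>\<close> unfolding \<Omega>_def by (simp add: field_simps)
    qed
    then show ?thesis using that unfolding \<Omega>_def by auto
  qed
  have Omult: "\<omega> * \<omega>' \<in> \<Omega>" if "\<omega> \<in> \<Omega>" "\<omega>' \<in> \<Omega>" for \<omega> \<omega>'
    using that unfolding \<Omega>_def by (auto simp: mult.assoc)
  have "Z \<noteq> {}" using cZ n3 by auto
  then obtain z0 where z0: "z0 \<in> Z" by blast
  have z00: "z0 \<noteq> 0" using z0 Z0 by auto
  have Osub: "\<Omega> \<subseteq> (\<lambda>w. w / z0) ` Z"
  proof
    fix \<omega> assume "\<omega> \<in> \<Omega>"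
    then have "\<omega> * z0 \<in> Z" using z0 unfolding \<Omega>_def by auto
    moreover have "\<omega> = (\<omega> * z0) / z0" using z00 by simp
    ultimately show "\<omega> \<in> (\<lambda>w. w / z0) ` Z" by blast
  qed
  have fO: "finite \<Omega>" using Osub fZ finite_surj by blast
  have "card \<Omega> \<le> card ((\<lambda>w. w / z0) ` Z)" using Osub by (simp add: card_mono fZ)
  also have "\<dots> \<le> n" using card_image_le[OF fZ] cZ by simp
  finally have cOle: "card \<Omega> \<le> n" .
  have "A \<noteq> {}" using cA n3 by auto
  then obtain a1 where a1: "a1 \<in> A" by blast
  have Asub: "(\<lambda>a. a * cnj a1) ` A \<subseteq> \<Omega>"
  proof
    fix x assume "x \<in> (\<lambda>a. a * cnj a1) ` A"
    then obtain a where a: "a \<in> A" "x = a * cnj a1" by blast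
    have "x * w \<in> Z" if "w \<in> Z" for w
    proof -
      have "a1 * cnj w \<in> Z" using inv a1 that by blast
      then have "a * cnj (a1 * cnj w) \<in> Z" using inv a(1) by blast
      then show ?thesis using a(2) by (simp add: mult.commute mult.left_commute)
    qed
    moreover have "x \<noteq> 0" using a nA a1 by auto
    ultimately show "x \<in> \<Omega>" unfolding \<Omega>_def by auto
  qed
  have injA: "inj_on (\<lambda>a. a * cnj a1) A" using nA a1 by (auto simp: inj_on_def)
  have "card A = card ((\<lambda>a. a * cnj a1) ` A)" using card_image[OF injA] by simp
  also have "\<dots> \<le> card \<Omega>" using Asub fO by (simp add: card_mono)
  finally have cOge: "card \<Omega> \<ge> n - 1" using cA by simp
  define Orb where "Orb z = (\<lambda>\<omega>. \<omega> * z) ` \<Omega>" for z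
  have cOrb: "card (Orb z) = card \<Omega>" if "z \<noteq> 0" for z
    unfolding Orb_def using that by (intro card_image) (auto simp: inj_on_def)
  have OrbZ: "Orb z \<subseteq> Z" if "z \<in> Z" for z
    using that unfolding Orb_def \<Omega>_def by auto
  have Zeq: "Z = Orb z0"
  proof (rule ccontr)
    assume "Z \<noteq> Orb z0"
    then obtain z1 where z1: "z1 \<in> Z" "z1 \<notin> Orb z0" using OrbZ[OF z0] by blast
    have z10: "z1 \<noteq> 0" using z1 Z0 by auto
    have disj: "Orb z0 \<inter> Orb z1 = {}"
    proof (rule ccontr)
      assume "Orb z0 \<inter> Orb z1 \<noteq> {}"
      then obtain x where x: "x \<in> Orb z0" "x \<in> Orb z1" by blast
      from x(1) obtain \<omega>' where w2: "\<omega>' \<in> \<Omega>" "x = \<omega>' * z0" unfolding Orb_def by (rule imageE)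
      from x(2) obtain \<omega> where w1: "\<omega> \<in> \<Omega>" "x = \<omega> * z1" unfolding Orb_def by (rule imageE)
      have w: "\<omega> \<in> \<Omega>" "\<omega>' \<in> \<Omega>" "\<omega> * z1 = \<omega>' * z0" using w1 w2 by auto
      have "\<omega> \<noteq> 0" using w unfolding \<Omega>_def by auto
      then have "z1 = (inverse \<omega> * \<omega>') * z0" using w(3)
        by (simp add: field_simps)
      moreover have "inverse \<omega> * \<omega>' \<in> \<Omega>" using Omult Oinv w by blast
      ultimately have "z1 \<in> Orb z0" unfolding Orb_def by blast
      then show False using z1 by blast
    qed
    have "card (Orb z0 \<union> Orb z1) = card (Orb z0) + card (Orb z1)"
      using disj fO unfolding Orb_def by (simp add: card_Un_disjoint)
    also have "\<dots> = 2 * card \<Omega>" using cOrb z00 z10 by simp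
    finally have "2 * card \<Omega> \<le> n"
      using card_mono[OF fZ, of "Orb z0 \<union> Orb z1"] OrbZ[OF z0] OrbZ[OF z1(1)] cZ by simp
    then show False using cOge n3 by linarith
  qed
  have cO: "card \<Omega> = n" using Zeq cZ cOrb[OF z00] by simp
  have root: "\<omega> ^ n = 1" if w: "\<omega> \<in> \<Omega>" for \<omega>
  proof -
    have im: "(\<lambda>x. \<omega> * x) ` \<Omega> = \<Omega>"
    proof (rule endo_inj_surj[OF fO])
      show "(\<lambda>x. \<omega> * x) ` \<Omega> \<subseteq> \<Omega>" using Omult w by blast
      show "inj_on (\<lambda>x. \<omega> * x) \<Omega>" using w unfolding \<Omega>_def by (auto simp: inj_on_def)
    qed
    have inj: "inj_on (\<lambda>x. \<omega> * x) \<Omega>" using w unfolding \<Omega>_def by (auto simp: inj_on_def)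
    have "prod id \<Omega> = prod id ((\<lambda>x. \<omega> * x) ` \<Omega>)" using im by simp
    also have "\<dots> = (\<Prod>x\<in>\<Omega>. \<omega> * x)" using prod.reindex[OF inj, of id] by simp
    also have "\<dots> = \<omega> ^ card \<Omega> * prod id \<Omega>" by (simp add: prod.distrib)
    finally have "prod id \<Omega> = \<omega> ^ n * prod id \<Omega>" using cO by simp
    moreover have "prod id \<Omega> \<noteq> 0" using fO unfolding \<Omega>_def by (simp add: prod_zero_iff)
    ultimately show ?thesis by simp
  qed
  have n1: "1 \<le> n" using n3 by simp
  have "\<Omega> = {z. z ^ n = 1}"
  proof (rule card_subset_eq)
    show "finite {z::complex. z ^ n = 1}" using finite_roots_unity[OF n1] .
    show "\<Omega> \<subseteq> {z. z ^ n = 1}" using root by blast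
    show "card \<Omega> = card {z::complex. z ^ n = 1}" using cO card_complex_roots_unity[OF n1] by simp
  qed
  also have "\<dots> = {exp (2 * of_real pi * \<i> * of_nat j / of_nat n) | j. j < n}"
    using complex_roots_unity[OF n1] .
  finally have Oeq: "\<Omega> = {exp (2 * of_real pi * \<i> * of_nat j / of_nat n) | j. j < n}" .
  have "Z = {exp (2 * of_real pi * \<i> * of_nat j / of_nat n) * z0 | j. j < n}"
    unfolding Zeq Orb_def Oeq by auto
  then show ?thesis using z00 by blast
qed



lemma col_aux:
  fixes p e :: pt
  assumes "(p + e) \<bullet> (p + e) = p \<bullet> p" "(p + l *\<^sub>R e) \<bullet> (p + l *\<^sub>R e) = p \<bullet> p" "e \<noteq> 0"
  shows "l = 0 \<or> l = 1"
proof -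
  have h1: "2 * (p \<bullet> e) + e \<bullet> e = 0" using assms(1)
    by (simp add: inner_add_left inner_add_right inner_commute algebra_simps)
  have h2: "2 * l * (p \<bullet> e) + l * l * (e \<bullet> e) = 0" using assms(2)
    by (simp add: inner_add_left inner_add_right inner_commute algebra_simps)
  have "l * (l - 1) * (e \<bullet> e) = 0"
  proof -
    have "l * (l - 1) * (e \<bullet> e) = (2 * l * (p \<bullet> e) + l * l * (e \<bullet> e)) - l * (2 * (p \<bullet> e) + e \<bullet> e)"
      by (simp add: algebra_simps)
    then show ?thesis using h1 h2 by simp
  qed
  then show ?thesis using assms(3) by simp
qed

lemma no3col:
  fixes g x0 y y' :: pt
  assumes "dist g y = dist g x0" "dist g y' = dist g x0" "y \<noteq> x0" "y' \<noteq> x0"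
    and "y' - x0 = l *\<^sub>R (y - x0)"
  shows "y' = y"
proof -
  let ?p = "x0 - g" and ?e = "y - x0"
  have sq: "a \<bullet> a = b \<bullet> b" if "norm a = norm b" for a b :: pt
    using that by (simp add: power2_norm_eq_inner[symmetric])
  have "norm (?p + ?e) = norm ?p" using assms(1) by (simp add: dist_norm norm_minus_commute)
  then have h1: "(?p + ?e) \<bullet> (?p + ?e) = ?p \<bullet> ?p" by (rule sq)
  have "y' - g = ?p + l *\<^sub>R ?e" using assms(5) by (simp add: algebra_simps)
  then have "norm (?p + l *\<^sub>R ?e) = norm (y' - g)" by (simp only:)
  also have "\<dots> = dist g y'" by (simp add: dist_norm norm_minus_commute)
  also have "\<dots> = dist g x0" by (rule assms(2))
  also have "\<dots> = norm ?p" by (simp add: dist_norm norm_minus_commute)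
  finally have "norm (?p + l *\<^sub>R ?e) = norm ?p" .
  then have h2: "(?p + l *\<^sub>R ?e) \<bullet> (?p + l *\<^sub>R ?e) = ?p \<bullet> ?p" by (rule sq)
  have "l = 0 \<or> l = 1" using col_aux[OF h1 h2] assms(3) by simp
  then show ?thesis using assms(4,5) by auto
qed

lemma cen_notin:
  fixes V :: "pt set"
  assumes fV: "finite V" and cV: "card V \<ge> 2" and eq: "\<forall>v\<in>V. \<forall>w\<in>V. dist g v = dist g w"
  shows "cen V \<notin> V"
proof
  define c where "c = cen V"
  assume cin: "cen V \<in> V"
  then have cV': "c \<in> V" by (simp add: c_def)
  define \<rho> where "\<rho> = norm (c - g)"
  have nv: "norm (v - g) = \<rho>" if "v \<in> V" for v
    using eq that cV' unfolding \<rho>_def by (metis dist_norm norm_minus_commute)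
  define n where "n = card V"
  have n0: "real n \<noteq> 0" using cV n_def by simp
  have sV: "(\<Sum>v\<in>V. v) = real n *\<^sub>R c" unfolding c_def cen_def n_def using n0 n_def by simp
  have "(\<Sum>v\<in>V. (v - g) \<bullet> (c - g)) = (\<Sum>v\<in>V. (v - g)) \<bullet> (c - g)"
    by (simp add: inner_sum_left)
  also have "(\<Sum>v\<in>V. (v - g)) = real n *\<^sub>R c - real n *\<^sub>R g"
    using sV by (simp add: sum_subtractf n_def sum_constant_scaleR del: sum_constant)
  finally have lhs: "(\<Sum>v\<in>V. (v - g) \<bullet> (c - g)) = real n * \<rho>^2"
    unfolding \<rho>_def by (simp add: scaleR_diff_right[symmetric] power2_norm_eq_inner)
  have le: "(v - g) \<bullet> (c - g) \<le> \<rho>^2" if "v \<in> V" for v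
    using norm_cauchy_schwarz[of "v - g" "c - g"] nv[OF that] unfolding \<rho>_def by (simp add: power2_eq_square)
  have "\<exists>v\<in>V. v \<noteq> c"
  proof (rule ccontr)
    assume "\<not> (\<exists>v\<in>V. v \<noteq> c)"
    then have "V \<subseteq> {c}" by auto
    then have "card V \<le> 1" using card_mono[of "{c}" V] by simp
    then show False using cV by simp
  qed
  then obtain v where v: "v \<in> V" "v \<noteq> c" by blast
  have lt: "(v - g) \<bullet> (c - g) < \<rho>^2"
  proof (rule ccontr)
    assume "\<not> (v - g) \<bullet> (c - g) < \<rho>^2"
    then have e: "(v - g) \<bullet> (c - g) = \<rho>^2" using le[OF v(1)] by simp
    have "(v - c) \<bullet> (v - c) = ((v - g) - (c - g)) \<bullet> ((v - g) - (c - g))" by simp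
    also have "\<dots> = (v - g) \<bullet> (v - g) - 2 * ((v - g) \<bullet> (c - g)) + (c - g) \<bullet> (c - g)"
      by (simp add: inner_diff_left inner_diff_right inner_commute)
    also have "\<dots> = 0"
    proof -
      have a: "(v - g) \<bullet> (v - g) = \<rho>^2" using nv[OF v(1)] by (simp add: power2_norm_eq_inner[symmetric])
      have b: "(c - g) \<bullet> (c - g) = \<rho>^2" unfolding \<rho>_def by (simp add: power2_norm_eq_inner)
      show ?thesis unfolding a b e by simp
    qed
    finally show False using v(2) by simp
  qed
  have "(\<Sum>v\<in>V. (v - g) \<bullet> (c - g)) < (\<Sum>v\<in>V. \<rho>^2)"
    using sum_strict_mono_ex1[OF fV, of "\<lambda>v. (v - g) \<bullet> (c - g)" "\<lambda>v. \<rho>^2"] le v lt by blast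
  then show False using lhs n_def by simp
qed

context snf begin

lemma Q0: "Q 0 = 0" using Q_lin linear_0 by blast

lemma refl_Q: "Q f = e \<Longrightarrow> reflv e (Q w) = Q (reflv f w)"
  unfolding reflv_def by (auto simp: Q_diff Q_scale Q_inner)

lemma T_diff: "bisector_reflection x y z - bisector_reflection x y z' = reflv (y - x) (z - z')"
  unfolding bisector_affine using refl_linear by (simp add: linear_diff)

lemma finV1: "finite V1" using finV0 by simp

lemma V0_refl_inv:
  assumes x: "x \<in> V0" and y: "y \<in> V0" and xy: "x \<noteq> y" and f: "Q f = y - x"
  shows "\<forall>v\<in>V0. reflv f (v - cen V0) + cen V0 \<in> V0"
proof -
  let ?T = "bisector_reflection x y"
  have 1: "(1::nat) \<in> {1..N}" using N2 by simp
  obtain j where j: "j \<in> {1..N}" "?T ` (P 1 ` V0) = P j ` V0" using symm[OF 1 x y xy] by blast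
  have f0: "f \<noteq> 0" using f xy Q0 by auto
  have img: "\<exists>v'\<in>V0. ?T (P 1 v) = P j v'" if "v \<in> V0" for v
  proof -
    have "?T (P 1 v) \<in> ?T ` (P 1 ` V0)" using that by blast
    then show ?thesis using j(2) by auto
  qed
  obtain x' where x': "x' \<in> V0" "?T (P 1 x) = P j x'" using img[OF x] by blast
  define \<kappa> where "\<kappa> = x' - reflv f x"
  have Fin: "reflv f v + \<kappa> \<in> V0" if v: "v \<in> V0" for v
  proof -
    obtain v' where v': "v' \<in> V0" "?T (P 1 v) = P j v'" using img[OF v] by blast
    have "(1/L) *\<^sub>R Q (v' - x') = P j v' - P j x'" by (simp add: P_diff)
    also have "\<dots> = ?T (P 1 v) - ?T (P 1 x)" using v' x' by simp
    also have "\<dots> = reflv (y - x) (P 1 v - P 1 x)" by (rule T_diff)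
    also have "\<dots> = reflv (y - x) ((1/L) *\<^sub>R Q (v - x))" by (simp add: P_diff)
    also have "\<dots> = (1/L) *\<^sub>R reflv (y - x) (Q (v - x))" using refl_linear by (simp add: linear_scale)
    also have "\<dots> = (1/L) *\<^sub>R Q (reflv f (v - x))" using refl_Q[OF f] by simp
    finally have "Q (v' - x') = Q (reflv f (v - x))" using L1 by simp
    then have "v' - x' = reflv f (v - x)" by (rule Q_inj)
    then have "v' = reflv f v + \<kappa>" unfolding \<kappa>_def using refl_linear by (simp add: linear_diff algebra_simps)
    then show ?thesis using v' by simp
  qed
  have FV: "(\<lambda>z. reflv f z + \<kappa>) ` V0 = V0"
  proof (rule endo_inj_surj[OF finV0])
    show "(\<lambda>z. reflv f z + \<kappa>) ` V0 \<subseteq> V0" using Fin by blast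
    show "inj_on (\<lambda>z. reflv f z + \<kappa>) V0" using refl_inj[OF f0] by (auto simp: inj_on_def)
  qed
  have ne: "V0 \<noteq> {}" using x by blast
  have cf: "reflv f (cen V0) + \<kappa> = cen V0" using cen_fixed[OF finV0 ne refl_linear FV] .
  show ?thesis
  proof
    fix v assume v: "v \<in> V0"
    have "reflv f (v - cen V0) + cen V0 = reflv f v + \<kappa>"
      using cf refl_linear by (simp add: linear_diff algebra_simps)
    then show "reflv f (v - cen V0) + cen V0 \<in> V0" using Fin[OF v] by simp
  qed
qed

lemma circle:
  assumes x: "x \<in> V0" and y: "y \<in> V0"
  shows "dist (cen V1) x = dist (cen V1) y"
proof (cases "x = y")
  case True then show ?thesis by simp
next
  case xy: False
  let ?T = "bisector_reflection x y"
  define k where "k = (2 * (((1/2) *\<^sub>R (x + y)) \<bullet> (y - x)) / ((y - x) \<bullet> (y - x))) *\<^sub>R (y - x)"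
  have Teq: "?T z = reflv (y - x) z + k" for z unfolding k_def by (rule bisector_affine)
  have sub: "?T ` V1 \<subseteq> V1"
  proof
    fix z assume "z \<in> ?T ` V1"
    then obtain z' i where i: "i \<in> {1..N}" "z' \<in> P i ` V0" "z = ?T z'" by blast
    obtain j where j: "j \<in> {1..N}" "?T ` (P i ` V0) = P j ` V0" using symm[OF i(1) x y xy] by blast
    have "z \<in> P j ` V0" using i(2,3) j(2) by blast
    then show "z \<in> V1" using j(1) by blast
  qed
  have e0: "y - x \<noteq> 0" using xy by simp
  have inj: "inj_on ?T V1" unfolding inj_on_def Teq using refl_inj[OF e0] by auto
  have TV: "(\<lambda>z. reflv (y - x) z + k) ` V1 = V1"
    using endo_inj_surj[OF finV1 sub inj] unfolding Teq .
  have ne: "V1 \<noteq> {}" using V0_V1[OF x] by blast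
  have "reflv (y - x) (cen V1) + k = cen V1" using cen_fixed[OF finV1 ne refl_linear TV] .
  then have "?T (cen V1) = cen V1" unfolding Teq .
  then show ?thesis using bis_fix[OF xy] by blast
qed

end


lemma vec_rcis:
  "cplx (r *\<^sub>R vector [cos (\<theta> + 2 * pi * real j / real n), sin (\<theta> + 2 * pi * real j / real n)])
    = exp (2 * of_real pi * \<i> * of_nat j / of_nat n) * rcis r \<theta>"
proof -
  have e: "exp (2 * of_real pi * \<i> * of_nat j / of_nat n) = cis (2 * pi * real j / real n)"
    unfolding cis_conv_exp by (simp add: mult.commute mult.left_commute)
  have "cis (2 * pi * real j / real n) * rcis r \<theta> = rcis r (\<theta> + 2 * pi * real j / real n)"
    unfolding rcis_def by (simp add: cis_mult mult.commute mult.left_commute add.commute)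
  moreover have "cplx (r *\<^sub>R vector [cos (\<theta> + 2 * pi * real j / real n), sin (\<theta> + 2 * pi * real j / real n)])
     = rcis r (\<theta> + 2 * pi * real j / real n)"
    by (simp add: cplx_def complex_eq_iff)
  ultimately show ?thesis using e by simp
qed

context snf begin

lemma part1:
  assumes n3: "card V0 \<ge> 3"
  shows "regular_polygon_vertices V0"
proof -
  define n where "n = card V0"
  define c where "c = cen V0"
  define g where "g = cen V1"
  have circ: "\<forall>v\<in>V0. \<forall>w\<in>V0. dist g v = dist g w" unfolding g_def using circle by blast
  have cnot: "c \<notin> V0" unfolding c_def using cen_notin[OF finV0 _ circ] n3 by simp
  have "V0 \<noteq> {}" using n3 by auto
  then obtain x0 where x0: "x0 \<in> V0" by blast
  define fy where "fy y = (SOME f. Q f = y - x0)" for y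
  have fyQ: "Q (fy y) = y - x0" for y unfolding fy_def using Q_surj by (rule someI_ex)
  have fy0: "fy y \<noteq> 0" if "y \<noteq> x0" for y using fyQ[of y] that Q0 by auto
  define A where "A = (\<lambda>y. alpha (fy y)) ` (V0 - {x0})"
  define Z where "Z = (\<lambda>v. cplx (v - c)) ` V0"
  have injZ: "inj_on (\<lambda>v. cplx (v - c)) V0" by (auto simp: inj_on_def cplx_inj)
  have fZ: "finite Z" unfolding Z_def using finV0 by simp
  have cZ: "card Z = n" unfolding Z_def n_def using card_image[OF injZ] .
  have Z0: "0 \<notin> Z" unfolding Z_def using cnot by (auto simp: cplx_0)
  have injA: "inj_on (\<lambda>y. alpha (fy y)) (V0 - {x0})"
  proof (rule inj_onI)
    fix y y' assume y: "y \<in> V0 - {x0}" and y': "y' \<in> V0 - {x0}" and eq: "alpha (fy y) = alpha (fy y')"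
    have yx: "y \<noteq> x0" "y' \<noteq> x0" using y y' by auto
    have "fy y' = ((fy y \<bullet> fy y') / (fy y \<bullet> fy y)) *\<^sub>R fy y"
      using alpha_eq[OF fy0[OF yx(1)] fy0[OF yx(2)] eq] .
    then have "Q (fy y') = ((fy y \<bullet> fy y') / (fy y \<bullet> fy y)) *\<^sub>R Q (fy y)" by (metis Q_scale)
    then have "y' - x0 = ((fy y \<bullet> fy y') / (fy y \<bullet> fy y)) *\<^sub>R (y - x0)" unfolding fyQ .
    moreover have yy: "y \<in> V0" "y' \<in> V0" using y y' by auto
    have d1: "dist g y = dist g x0" using circ yy(1) x0 by blast
    have d2: "dist g y' = dist g x0" using circ yy(2) x0 by blast
    ultimately have "y' = y" using no3col[OF d1 d2 yx] by blast
    then show "y = y'" by simp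
  qed
  have cA: "card A \<ge> n - 1" unfolding A_def n_def using card_image[OF injA] finV0 x0 by simp
  have nA: "\<forall>a\<in>A. a \<noteq> 0" unfolding A_def using alpha_norm fy0 by fastforce
  have inv: "\<forall>a\<in>A. \<forall>w\<in>Z. a * cnj w \<in> Z"
  proof (intro ballI)
    fix a w assume a: "a \<in> A" and w: "w \<in> Z"
    then obtain y v where y: "y \<in> V0" "y \<noteq> x0" "a = alpha (fy y)" and v: "v \<in> V0" "w = cplx (v - c)"
      unfolding A_def Z_def by blast
    have "a * cnj w = cplx (reflv (fy y) (v - c))" using cplx_refl[OF fy0[OF y(2)]] y(3) v(2) by simp
    also have "\<dots> = cplx ((reflv (fy y) (v - c) + c) - c)" by simp
    finally have eq: "a * cnj w = cplx ((reflv (fy y) (v - c) + c) - c)" .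
    have "reflv (fy y) (v - c) + c \<in> V0"
      using V0_refl_inv[OF x0 y(1) y(2)[symmetric] fyQ] v(1) unfolding c_def by blast
    then show "a * cnj w \<in> Z" unfolding eq Z_def by blast
  qed
  obtain z0 where z0: "z0 \<noteq> 0" "Z = {exp (2 * of_real pi * \<i> * of_nat j / of_nat n) * z0 | j. j < n}"
    using core[OF fZ cZ _ Z0 cA nA inv] n3 n_def by blast
  define r where "r = cmod z0"
  define \<theta> where "\<theta> = Arg z0"
  have z0r: "z0 = rcis r \<theta>" unfolding r_def \<theta>_def by (simp add: rcis_cmod_Arg)
  define vj :: "nat \<Rightarrow> pt" where "vj j = r *\<^sub>R vector [cos (\<theta> + 2 * pi * real j / real n), sin (\<theta> + 2 * pi * real j / real n)]" for j
  have cvj: "cplx (vj j) = exp (2 * of_real pi * \<i> * of_nat j / of_nat n) * z0" for j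
    unfolding vj_def z0r by (rule vec_rcis)
  have "V0 = {c + vj k | k. k < n}"
  proof (intro equalityI subsetI)
    fix v assume v: "v \<in> V0"
    then have "cplx (v - c) \<in> Z" unfolding Z_def by blast
    then obtain j where j: "j < n" "cplx (v - c) = exp (2 * of_real pi * \<i> * of_nat j / of_nat n) * z0"
      using z0(2) by blast
    then have "cplx (v - c) = cplx (vj j)" using cvj by simp
    then have "v = c + vj j" by (simp add: cplx_inj algebra_simps)
    then show "v \<in> {c + vj k | k. k < n}" using j(1) by blast
  next
    fix v assume "v \<in> {c + vj k | k. k < n}"
    then obtain j where j: "j < n" "v = c + vj j" by blast
    have "exp (2 * of_real pi * \<i> * of_nat j / of_nat n) * z0 \<in> Z" using z0(2) j(1) by blast
    then obtain u where u: "u \<in> V0" "exp (2 * of_real pi * \<i> * of_nat j / of_nat n) * z0 = cplx (u - c)"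
      unfolding Z_def by (rule imageE)
    then have "cplx (u - c) = cplx (vj j)" using cvj by simp
    then have "u = v" using j(2) by (simp add: cplx_inj algebra_simps)
    then show "v \<in> V0" using u(1) by simp
  qed
  moreover have "r > 0" unfolding r_def using z0(1) by simp
  ultimately show ?thesis unfolding regular_polygon_vertices_def vj_def n_def by blast
qed

end


lemma betw:
  fixes L \<eta> m M s1 s2 c t :: real
  assumes L: "L > 0" and eta: "\<eta> = 1 \<or> \<eta> = -1" and s1: "s1 \<in> {m..M}" and s2: "s2 \<in> {m..M}"
    and lo: "min (c + \<eta> * s1 / L) (c + \<eta> * s2 / L) \<le> t"
    and hi: "t \<le> max (c + \<eta> * s1 / L) (c + \<eta> * s2 / L)"
  shows "\<exists>s\<in>{m..M}. t = c + \<eta> * s / L"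
proof -
  define y where "y = L * (t - c)"
  have P1: "w / L \<le> t - c \<longleftrightarrow> w \<le> y" for w unfolding y_def using L by (simp add: divide_le_eq mult.commute)
  have P2: "t - c \<le> w / L \<longleftrightarrow> y \<le> w" for w unfolding y_def using L by (simp add: le_divide_eq mult.commute)
  have P3: "- (w / L) \<le> t - c \<longleftrightarrow> - y \<le> w" for w
  proof -
    have "- (w / L) \<le> t - c \<longleftrightarrow> c - t \<le> w / L" by linarith
    also have "\<dots> \<longleftrightarrow> L * (c - t) \<le> w" using L by (simp add: le_divide_eq mult.commute)
    finally show ?thesis unfolding y_def by (simp add: algebra_simps)
  qed
  have P4: "t - c \<le> - (w / L) \<longleftrightarrow> w \<le> - y" for w
  proof -
    have "t - c \<le> - (w / L) \<longleftrightarrow> w / L \<le> c - t" by linarith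
    also have "\<dots> \<longleftrightarrow> w \<le> L * (c - t)" using L by (simp add: divide_le_eq mult.commute)
    finally show ?thesis unfolding y_def by (simp add: algebra_simps)
  qed
  show ?thesis
  proof (cases "\<eta> = 1")
    case True
    have a1: "s1 / L \<le> t - c \<or> s2 / L \<le> t - c" using lo True by (auto simp: min_def split: if_splits)
    have a2: "t - c \<le> s1 / L \<or> t - c \<le> s2 / L" using hi True by (auto simp: max_def split: if_splits)
    have "y \<in> {m..M}" using a1 a2 s1 s2 unfolding P1 P2 by auto
    moreover have "t = c + \<eta> * y / L" using True L unfolding y_def by simp
    ultimately show ?thesis by blast
  next
    case False
    then have F: "\<eta> = -1" using eta by simp
    have a1: "- (s1 / L) \<le> t - c \<or> - (s2 / L) \<le> t - c" using lo F by (auto simp: min_def split: if_splits)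
    have a2: "t - c \<le> - (s1 / L) \<or> t - c \<le> - (s2 / L)" using hi F by (auto simp: max_def split: if_splits)
    have "- y \<in> {m..M}" using a1 a2 s1 s2 unfolding P3 P4 by auto
    moreover have "t = c + \<eta> * (- y) / L" using F L unfolding y_def by simp
    ultimately show ?thesis by blast
  qed
qed

lemma le_div_L:
  fixes x L :: real
  assumes "L > 1" "x \<le> x / L" shows "x \<le> 0"
proof -
  have "x * L \<le> x" using assms by (simp add: le_divide_eq)
  then have "x * (L - 1) \<le> 0" by (simp add: algebra_simps)
  then show ?thesis using assms(1) by (simp add: mult_le_0_iff)
qed

context snf begin

lemma P_inj: "P i x = P i y \<Longrightarrow> x = y"
proof -
  assume "P i x = P i y"
  then have "dist x y / L = 0" using dist_P[of i x y] by simp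
  then show ?thesis using L1 by simp
qed

lemma V1_in_cell:
  assumes p: "p \<in> V1" and i: "i \<in> {1..N}" and pi: "p \<in> P i ` K"
  shows "p \<in> P i ` V0"
proof -
  from p obtain k where k: "k \<in> {1..N}" "p \<in> P k ` V0" by blast
  show ?thesis
  proof (cases "k = i")
    case True then show ?thesis using k by simp
  next
    case False
    have "p \<in> P k ` K" using k(2) V0_K by blast
    then have "p \<in> P i ` K \<inter> P k ` K" using pi by blast
    moreover have "i \<noteq> k" using False by simp
    ultimately have "p \<in> P i ` V0 \<inter> P k ` V0" using nest[OF i k(1)] by simp
    then show ?thesis by (rule IntD1)
  qed
qed

lemma edge_cell:
  assumes e: "(p, q) \<in> E"
  shows "\<exists>i\<in>{1..N}. p \<in> P i ` V0 \<and> q \<in> P i ` V0"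
proof -
  have pq: "p \<in> V1" "q \<in> V1" and ex: "\<exists>i\<in>{1..N}. p \<in> P i ` K \<and> q \<in> P i ` K"
    using e unfolding E_def by simp_all
  from ex obtain i where i: "i \<in> {1..N}" "p \<in> P i ` K" "q \<in> P i ` K" by blast
  have "p \<in> P i ` V0" using V1_in_cell[OF pq(1) i(1,2)] .
  moreover have "q \<in> P i ` V0" using V1_in_cell[OF pq(2) i(1,3)] .
  ultimately show ?thesis using i(1) by blast
qed

lemma part2:
  assumes V0ab: "V0 = {a, b}" and ab: "a \<noteq> b"
  shows "K = closed_segment a b"
proof -
  define u where "u = b - a"
  have u0: "u \<noteq> 0" using ab unfolding u_def by simp
  have uu: "u \<bullet> u > 0" using u0 by simp
  define d where "d = (1/L) *\<^sub>R Q u"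
  have Pd: "P i b - P i a = d" for i by (simp add: P_diff d_def u_def)
  have vert: "x = P i a \<or> x = P i b" if "x \<in> P i ` V0" for x i using that V0ab by auto
  have edge: "\<exists>t. q = p + t *\<^sub>R d" if pq: "(p, q) \<in> E" for p q
  proof -
    obtain i where "i \<in> {1..N}" "p \<in> P i ` V0" "q \<in> P i ` V0" using edge_cell[OF pq] by blast
    then have "p = P i a \<or> p = P i b" "q = P i a \<or> q = P i b" using vert by blast+
    then have "q = p + 0 *\<^sub>R d \<or> q = p + 1 *\<^sub>R d \<or> q = p + (-1) *\<^sub>R d"
      using Pd[of i] by (auto simp: algebra_simps)
    then show ?thesis by blast
  qed
  have path: "\<exists>t. q = p + t *\<^sub>R d" if "(p, q) \<in> E\<^sup>*" for p q
    using that
  proof (induction rule: rtrancl_induct)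
    case base
    then show ?case by (rule exI[of _ 0]) simp
  next
    case (step y z)
    then obtain t where t: "y = p + t *\<^sub>R d" by blast
    obtain t' where t': "z = y + t' *\<^sub>R d" using edge[OF step(2)] by blast
    have "z = p + (t + t') *\<^sub>R d" using t t' by (simp add: algebra_simps)
    then show ?case by blast
  qed
  have aV0: "a \<in> V0" and bV0: "b \<in> V0" using V0ab by auto
  have aV1: "a \<in> V1" using V0_V1[OF aV0] .
  have bV1: "b \<in> V1" using V0_V1[OF bV0] .
  have onl: "\<exists>t. p = a + t *\<^sub>R d" if "p \<in> V1" for p using path conn[OF aV1 that] by blast
  obtain lam where lam: "b = a + lam *\<^sub>R d" using onl[OF bV1] by blast
  have ul: "u = lam *\<^sub>R d" using lam unfolding u_def by simp
  have lam0: "lam \<noteq> 0" using ul u0 by auto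
  have nd: "norm d = norm u / L" unfolding d_def using L1 by (simp add: Q_norm)
  have "norm u = \<bar>lam\<bar> * (norm u / L)" using ul nd by simp
  then have alam: "\<bar>lam\<bar> = L" using u0 L1 by (simp add: field_simps)
  define \<eta> where "\<eta> = L / lam"
  have Qu: "Q u = \<eta> *\<^sub>R u"
  proof -
    have "Q u = L *\<^sub>R d" unfolding d_def using L1 by simp
    also have "d = (1 / lam) *\<^sub>R u" using ul lam0 by simp
    finally show ?thesis unfolding \<eta>_def by simp
  qed
  have eta: "\<eta> = 1 \<or> \<eta> = -1"
  proof -
    have "\<bar>\<eta>\<bar> = 1" unfolding \<eta>_def using alam L1 lam0 by (simp add: abs_div)
    then show ?thesis by auto
  qed
  have eta2: "\<eta> * \<eta> = 1" using eta by auto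
  define \<tau> where "\<tau> z = ((z - a) \<bullet> u) / (u \<bullet> u)" for z
  have \<tau>line: "\<tau> (a + s *\<^sub>R u) = s" for s unfolding \<tau>_def using uu by simp
  have lineV1: "p = a + \<tau> p *\<^sub>R u" if pV: "p \<in> V1" for p
  proof -
    obtain t where t: "p = a + t *\<^sub>R d" using onl[OF pV] by blast
    have "d = (1 / lam) *\<^sub>R u" using ul lam0 by simp
    then have "p = a + (t / lam) *\<^sub>R u" using t by simp
    then show ?thesis using \<tau>line by metis
  qed
  define \<pi> where "\<pi> i = \<tau> (P i a)" for i
  have PaV1: "P i a \<in> V1" if "i \<in> {1..N}" for i using that aV0 by blast
  have Pa: "P i a = a + \<pi> i *\<^sub>R u" if "i \<in> {1..N}" for i
    unfolding \<pi>_def using lineV1[OF PaV1[OF that]] .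
  have Pline: "P i (a + s *\<^sub>R u) = a + (\<pi> i + \<eta> * s / L) *\<^sub>R u" if i: "i \<in> {1..N}" for i s
  proof -
    have "P i (a + s *\<^sub>R u) - P i a = (1/L) *\<^sub>R Q (s *\<^sub>R u)" using P_diff[of i "a + s *\<^sub>R u" a] by simp
    also have "\<dots> = (\<eta> * s / L) *\<^sub>R u" by (simp add: Q_scale Qu)
    finally show ?thesis using Pa[OF i] by (simp add: algebra_simps)
  qed
  have Qinner: "Q w \<bullet> u = \<eta> * (w \<bullet> u)" for w
  proof -
    have "Q w \<bullet> Q u = w \<bullet> u" by (rule Q_inner)
    then have "\<eta> * (Q w \<bullet> u) = w \<bullet> u" unfolding Qu by simp
    then have "\<eta> * (\<eta> * (Q w \<bullet> u)) = \<eta> * (w \<bullet> u)" by simp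
    then show ?thesis using eta2 by (simp add: mult.assoc[symmetric])
  qed
  have \<tau>P: "\<tau> (P i z) = \<pi> i + \<eta> * \<tau> z / L" if i: "i \<in> {1..N}" for i z
  proof -
    have "P i z - a = (1/L) *\<^sub>R Q (z - a) + \<pi> i *\<^sub>R u"
      using P_diff[of i z a] Pa[OF i] by (simp add: algebra_simps)
    then have "(P i z - a) \<bullet> u = (1/L) * (\<eta> * ((z - a) \<bullet> u)) + \<pi> i * (u \<bullet> u)"
      by (simp add: inner_add_left Qinner)
    then show ?thesis unfolding \<tau>_def using uu by (simp add: field_simps)
  qed
  define \<delta> where "\<delta> z = norm ((z - a) - \<tau> z *\<^sub>R u)" for z
  have \<delta>P: "\<delta> (P i z) = \<delta> z / L" if i: "i \<in> {1..N}" for i z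
  proof -
    have A: "P i z - a = (1/L) *\<^sub>R Q (z - a) + \<pi> i *\<^sub>R u"
      using P_diff[of i z a] Pa[OF i] by (simp add: algebra_simps)
    have "(P i z - a) - \<tau> (P i z) *\<^sub>R u = (1/L) *\<^sub>R Q (z - a) + \<pi> i *\<^sub>R u - (\<pi> i + \<eta> * \<tau> z / L) *\<^sub>R u"
      by (simp only: A \<tau>P[OF i])
    also have "\<dots> = (1/L) *\<^sub>R (Q (z - a) - (\<tau> z * \<eta>) *\<^sub>R u)"
      by (simp add: algebra_simps)
    also have "(\<tau> z * \<eta>) *\<^sub>R u = Q (\<tau> z *\<^sub>R u)" by (simp add: Q_scale Qu)
    also have "Q (z - a) - Q (\<tau> z *\<^sub>R u) = Q ((z - a) - \<tau> z *\<^sub>R u)" by (simp add: Q_diff)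
    finally have "(P i z - a) - \<tau> (P i z) *\<^sub>R u = (1/L) *\<^sub>R Q ((z - a) - \<tau> z *\<^sub>R u)" .
    then show ?thesis unfolding \<delta>_def using L1 by (simp add: Q_norm)
  qed
  have cont\<tau>: "continuous_on K \<tau>" unfolding \<tau>_def using uu by (intro continuous_intros) auto
  have cont\<delta>: "continuous_on K \<delta>" unfolding \<delta>_def \<tau>_def using uu by (intro continuous_intros) auto
  have inK: "\<exists>i\<in>{1..N}. \<exists>z'\<in>K. z = P i z'" if "z \<in> K" for z
  proof -
    have "z \<in> (\<Union>i\<in>{1..N}. P i ` K)" using that by (subst (asm) Katt)
    then show ?thesis by blast
  qed
  have Kline: "z = a + \<tau> z *\<^sub>R u" if z: "z \<in> K" for z
  proof -
    obtain zs where zs: "zs \<in> K" "\<And>z. z \<in> K \<Longrightarrow> \<delta> z \<le> \<delta> zs"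
      using continuous_attains_sup[OF cK Kne cont\<delta>] by blast
    obtain i z' where iz: "i \<in> {1..N}" "z' \<in> K" "zs = P i z'" using inK[OF zs(1)] by blast
    have "\<delta> zs = \<delta> z' / L" using \<delta>P[OF iz(1)] iz(3) by simp
    also have "\<dots> \<le> \<delta> zs / L" using zs(2)[OF iz(2)] L1 by (simp add: divide_right_mono)
    finally have "\<delta> zs \<le> \<delta> zs / L" .
    then have "\<delta> zs \<le> 0" using L1 le_div_L by blast
    then have "\<delta> z \<le> 0" using zs(2)[OF z] by simp
    then have "\<delta> z = 0" unfolding \<delta>_def using norm_ge_zero by (metis antisym)
    then show ?thesis unfolding \<delta>_def by (simp add: algebra_simps)
  qed
  obtain zm where zm: "zm \<in> K" "\<And>z. z \<in> K \<Longrightarrow> \<tau> zm \<le> \<tau> z"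
    using continuous_attains_inf[OF cK Kne cont\<tau>] by blast
  obtain zM where zM: "zM \<in> K" "\<And>z. z \<in> K \<Longrightarrow> \<tau> z \<le> \<tau> zM"
    using continuous_attains_sup[OF cK Kne cont\<tau>] by blast
  define m where "m = \<tau> zm"
  define M where "M = \<tau> zM"
  have aK: "a \<in> K" and bK: "b \<in> K" using V0_K aV0 bV0 by auto
  have \<tau>a: "\<tau> a = 0" unfolding \<tau>_def by simp
  have \<tau>b: "\<tau> b = 1" unfolding \<tau>_def u_def using uu u_def by simp
  have m0: "m \<le> 0" using zm(2)[OF aK] \<tau>a m_def by simp
  have M1: "1 \<le> M" using zM(2)[OF bK] \<tau>b M_def by simp
  have \<tau>K: "\<tau> z \<in> {m..M}" if "z \<in> K" for z using zm(2)[OF that] zM(2)[OF that] m_def M_def by simp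
  obtain i0 z0 where i0: "i0 \<in> {1..N}" "z0 \<in> K" "zm = P i0 z0" using inK[OF zm(1)] by blast
  have mi0: "m = \<pi> i0 + \<eta> * \<tau> z0 / L" unfolding m_def i0(3) using \<tau>P[OF i0(1)] .
  obtain i1 z1 where i1: "i1 \<in> {1..N}" "z1 \<in> K" "zM = P i1 z1" using inK[OF zM(1)] by blast
  have Mi1: "M = \<pi> i1 + \<eta> * \<tau> z1 / L" unfolding M_def i1(3) using \<tau>P[OF i1(1)] .
  have Lp: "L > 0" using L1 by simp
  have s0: "(0::real) \<in> {m..M}" and s1: "(1::real) \<in> {m..M}" using m0 M1 by auto
  have \<tau>Pa: "\<tau> (P i a) = \<pi> i + \<eta> * 0 / L" for i unfolding \<pi>_def by simp
  have \<tau>Pb: "\<tau> (P i b) = \<pi> i + \<eta> * 1 / L" if "i \<in> {1..N}" for i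
    using \<tau>P[OF that, of b] \<tau>b by simp
  have cross: "\<exists>x y. (x, y) \<in> E \<and> \<tau> x \<le> t \<and> t < \<tau> y"
    if p: "p \<in> V1" "\<tau> p \<le> t" and q: "q \<in> V1" "t < \<tau> q" for p q t
  proof (rule ccontr)
    assume nc: "\<not> (\<exists>x y. (x, y) \<in> E \<and> \<tau> x \<le> t \<and> t < \<tau> y)"
    have "\<tau> z \<le> t" if "(p, z) \<in> E\<^sup>*" for z
      using that
    proof (induction rule: rtrancl_induct)
      case base then show ?case using p(2) .
    next
      case (step y z)
      then show ?case using nc by fastforce
    qed
    then have "\<tau> q \<le> t" using conn[OF p(1) q(1)] by blast
    then show False using q(2) by simp
  qed
  have cover: "\<exists>i\<in>{1..N}. \<exists>s\<in>{m..M}. t = \<pi> i + \<eta> * s / L" if t: "t \<in> {m..M}" for t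
  proof (cases "\<forall>p\<in>V1. t < \<tau> p")
    case True
    then have "t < \<pi> i0" using PaV1[OF i0(1)] unfolding \<pi>_def by blast
    then have "min (\<pi> i0 + \<eta> * \<tau> z0 / L) (\<pi> i0 + \<eta> * 0 / L) \<le> t"
          "t \<le> max (\<pi> i0 + \<eta> * \<tau> z0 / L) (\<pi> i0 + \<eta> * 0 / L)"
      using t mi0 by auto
    then show ?thesis using betw[OF Lp eta \<tau>K[OF i0(2)] s0] i0(1) by blast
  next
    case nA: False
    show ?thesis
    proof (cases "\<forall>p\<in>V1. \<tau> p \<le> t")
      case True
      then have "\<pi> i1 \<le> t" using PaV1[OF i1(1)] unfolding \<pi>_def by blast
      then have "min (\<pi> i1 + \<eta> * 0 / L) (\<pi> i1 + \<eta> * \<tau> z1 / L) \<le> t"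
            "t \<le> max (\<pi> i1 + \<eta> * 0 / L) (\<pi> i1 + \<eta> * \<tau> z1 / L)"
        using t Mi1 by auto
      then show ?thesis using betw[OF Lp eta s0 \<tau>K[OF i1(2)]] i1(1) by blast
    next
      case False
      then obtain q where q: "q \<in> V1" "t < \<tau> q" by (meson not_le)
      obtain p where p: "p \<in> V1" "\<tau> p \<le> t" using nA by (meson not_le)
      obtain x y where xy: "(x, y) \<in> E" "\<tau> x \<le> t" "t < \<tau> y" using cross[OF p q] by blast
      obtain j where j: "j \<in> {1..N}" "x \<in> P j ` V0" "y \<in> P j ` V0" using edge_cell[OF xy(1)] by blast
      have vx: "\<exists>s\<in>{0,1}. \<tau> x = \<pi> j + \<eta> * s / L"
        using vert[OF j(2)] \<tau>Pa[of j] \<tau>Pb[OF j(1)] by auto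
      have vy: "\<exists>s\<in>{0,1}. \<tau> y = \<pi> j + \<eta> * s / L"
        using vert[OF j(3)] \<tau>Pa[of j] \<tau>Pb[OF j(1)] by auto
      obtain sx sy where sxy: "sx \<in> {0,1}" "sy \<in> {0,1}" "\<tau> x = \<pi> j + \<eta> * sx / L" "\<tau> y = \<pi> j + \<eta> * sy / L"
        using vx vy by blast
      have sxm: "sx \<in> {m..M}" "sy \<in> {m..M}" using sxy(1,2) s0 s1 by auto
      have "min (\<pi> j + \<eta> * sx / L) (\<pi> j + \<eta> * sy / L) \<le> t"
           "t \<le> max (\<pi> j + \<eta> * sx / L) (\<pi> j + \<eta> * sy / L)"
        using xy(2,3) sxy(3,4) by auto
      then show ?thesis using betw[OF Lp eta sxm] j(1) by blast
    qed
  qed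
  have Jsub: "a + s *\<^sub>R u \<in> K" if s: "s \<in> {m..M}" for s
  proof -
    define h where "h s = infdist (a + s *\<^sub>R u) K" for s
    have ch: "continuous_on {m..M} h" unfolding h_def by (intro continuous_intros)
    have ne: "{m..M} \<noteq> {}" using m0 M1 by auto
    obtain ss where ss: "ss \<in> {m..M}" "\<And>s. s \<in> {m..M} \<Longrightarrow> h s \<le> h ss"
      using continuous_attains_sup[OF compact_Icc ne ch] by blast
    obtain i s' where is': "i \<in> {1..N}" "s' \<in> {m..M}" "ss = \<pi> i + \<eta> * s' / L" using cover[OF ss(1)] by blast
    have img: "P i (a + s' *\<^sub>R u) = a + ss *\<^sub>R u" using Pline[OF is'(1)] is'(3) by simp
    have clK: "closed K" using cK by (rule compact_imp_closed)
    obtain k where k: "k \<in> K" "infdist (a + s' *\<^sub>R u) K = dist (a + s' *\<^sub>R u) k"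
      using infdist_attains_inf[OF clK Kne] by blast
    have "h ss = infdist (P i (a + s' *\<^sub>R u)) K" unfolding h_def img ..
    also have "\<dots> \<le> dist (P i (a + s' *\<^sub>R u)) (P i k)" using P_K[OF is'(1) k(1)] by (rule infdist_le)
    also have "\<dots> = h s' / L" unfolding dist_P h_def k(2) ..
    also have "\<dots> \<le> h ss / L" using ss(2)[OF is'(2)] L1 by (simp add: divide_right_mono)
    finally have "h ss \<le> h ss / L" .
    then have "h ss \<le> 0" using L1 le_div_L by blast
    then have "h s \<le> 0" using ss(2)[OF s] by simp
    then have "infdist (a + s *\<^sub>R u) K = 0" unfolding h_def using infdist_nonneg by (metis antisym)
    then show ?thesis using in_closed_iff_infdist_zero[OF clK Kne] by blast
  qed
  have Keq: "K = (\<lambda>s. a + s *\<^sub>R u) ` {m..M}"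
  proof
    show "K \<subseteq> (\<lambda>s. a + s *\<^sub>R u) ` {m..M}"
    proof
      fix z assume z: "z \<in> K"
      then show "z \<in> (\<lambda>s. a + s *\<^sub>R u) ` {m..M}" using Kline[OF z] \<tau>K[OF z] by blast
    qed
    show "(\<lambda>s. a + s *\<^sub>R u) ` {m..M} \<subseteq> K" using Jsub by blast
  qed
  have MM: "M - m \<le> 1"
  proof (rule ccontr)
    assume "\<not> M - m \<le> 1"
    then have mlt: "m < M - 1" by simp
    have "a \<in> essential_fixed_points L U \<nu> N" using aV0 .
    then obtain y i j where y: "y \<in> fixed_points L U \<nu> N" "y \<noteq> a" and ij: "i \<in> {1..N}" "j \<in> {1..N}" "i \<noteq> j"
        and eq: "P i a = P j y"
      unfolding essential_fixed_points_def by blast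
    have yK: "y \<in> K" using y(1) fixed_in_K unfolding fixed_points_def by blast
    have "P j y \<in> P i ` K \<inter> P j ` K" using eq aK yK by (metis IntI image_eqI)
    then have "P j y \<in> P j ` V0" using nest[OF ij] by blast
    then obtain y' where "y' \<in> V0" "P j y = P j y'" by blast
    then have "y \<in> V0" using P_inj by metis
    then have yb: "y = b" using y(2) V0ab by auto
    have \<pi>ij: "\<pi> i = \<pi> j + \<eta> / L" using \<tau>Pb[OF ij(2)] eq yb unfolding \<pi>_def by simp
    define F where "F s = P i (a + s *\<^sub>R u)" for s
    have injF: "inj_on F {m..M-1}"
    proof (rule inj_onI)
      fix s s' assume "F s = F s'"
      then have "a + s *\<^sub>R u = a + s' *\<^sub>R u" unfolding F_def using P_inj by blast
      then show "s = s'" using u0 by simp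
    qed
    have Fsub: "F ` {m..M-1} \<subseteq> P i ` V0"
    proof
      fix z assume "z \<in> F ` {m..M-1}"
      then obtain s where s: "s \<in> {m..M-1}" "z = F s" by blast
      have sK: "a + s *\<^sub>R u \<in> K" using Jsub s(1) by simp
      have s1K: "a + (s + 1) *\<^sub>R u \<in> K" using Jsub s(1) m0 by simp
      have "z = P j (a + (s + 1) *\<^sub>R u)"
        unfolding s(2) F_def Pline[OF ij(1)] Pline[OF ij(2)] \<pi>ij by (simp add: algebra_simps add_divide_distrib)
      then have "z \<in> P i ` K \<inter> P j ` K" using s(2) sK s1K unfolding F_def by blast
      then show "z \<in> P i ` V0" using nest[OF ij] by blast
    qed
    have "finite (F ` {m..M-1})" using Fsub finV0 finite_subset by blast
    then have "finite {m..M-1}" using finite_imageD injF by blast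
    then show False using infinite_Icc[OF mlt] by blast
  qed
  have mM: "m = 0" "M = 1" using MM m0 M1 by auto
  have "K = (\<lambda>s. a + s *\<^sub>R u) ` {0..1}" using Keq mM by simp
  also have "\<dots> = (\<lambda>s. (1 - s) *\<^sub>R a + s *\<^sub>R b) ` {0..1}"
  proof (rule image_cong[OF refl])
    fix s :: real show "a + s *\<^sub>R u = (1 - s) *\<^sub>R a + s *\<^sub>R b" by (simp add: u_def algebra_simps)
  qed
  also have "\<dots> = closed_segment a b"
    unfolding closed_segment_def by auto
  finally show ?thesis .
qed

end

theorem proposition2p6:
  fixes L :: real and N :: nat and U :: "pt \<Rightarrow> pt" and \<nu> :: "nat \<Rightarrow> pt" and K :: "pt set"
  assumes "L > 1" and "N \<ge> 2"
    and "\<forall>x y. dist (U x) (U y) = dist x y"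
    and "\<nu> 1 = 0"
    and "compact K" and "K \<noteq> {}" and "K = (\<Union>i\<in>{1..N}. Psi L U \<nu> i ` K)"
    and "simple_nested_fractal L U \<nu> N K"
  shows "(card (essential_fixed_points L U \<nu> N) \<ge> 3 \<longrightarrow>
            regular_polygon_vertices (essential_fixed_points L U \<nu> N))
       \<and> (card (essential_fixed_points L U \<nu> N) = 2 \<longrightarrow>
            (\<exists>a b. essential_fixed_points L U \<nu> N = {a, b} \<and> K = closed_segment a b))"
proof -
  interpret snf L N U \<nu> K
    by unfold_locales (fact assms(1), fact assms(2), fact assms(3), fact assms(5), fact assms(6),
        fact assms(7), fact assms(8))
  show ?thesis
  proof (intro conjI impI)
    assume "card (essential_fixed_points L U \<nu> N) \<ge> 3"
    then show "regular_polygon_vertices (essential_fixed_points L U \<nu> N)" by (rule part1)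
  next
    assume c2: "card (essential_fixed_points L U \<nu> N) = 2"
    have "\<exists>x y. essential_fixed_points L U \<nu> N = {x, y} \<and> x \<noteq> y"
      using c2 unfolding card_2_iff .
    then obtain a b where ab: "essential_fixed_points L U \<nu> N = {a, b}" "a \<noteq> b"
      by (elim exE conjE)
    have "K = closed_segment a b" using part2[OF ab(1) ab(2)] .
    with ab(1) show "\<exists>a b. essential_fixed_points L U \<nu> N = {a, b} \<and> K = closed_segment a b"
      by (intro exI conjI)
  qed
qed

end
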